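(* For every bipartite graph $G$ there is a bipartite graph $H$ such that $\mathrm{Ind}(H)$ is vertex-decomposable and the $h$-vector of $\mathrm{Ind}(H)$ (with trailing zeros removed) equals the face vector of $\mathrm{Ind}(G)$.
   Context: $\mathrm{Ind}(G)$ is the simplicial complex of independent sets of $G$. Face vector of a $(d-1)$-dimensional complex: $(f_{-1},\ldots,f_{d-1})$, $f_i$ = number of faces with $i+1$ elements; $h$-vector: $(h_0,\ldots,h_d)$, $h_j=\sum_{i=0}^{j}(-1)^{j-i}\binom{d-i}{j-i}f_{i-1}$. A pure complex $\Delta$ is vertex-decomposable if it is a simplex or has a vertex $v$ with $\mathrm{link}_\Delta v=\{\tau\in\Delta: v\notin\tau,\ \tau\cup\{v\}\in\Delta\}$ and $\mathrm{del}_\Delta v=\{\tau\in\Delta: v\notin\tau\}$ both pure and vertex-decomposable. *)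

theory Defs
  imports Main
begin

definition simple_graph :: "'a set \<Rightarrow> 'a set set \<Rightarrow> bool" where
  "simple_graph V E \<longleftrightarrow> finite V \<and> (\<forall>e\<in>E. e \<subseteq> V \<and> card e = 2)"

definition bipartite :: "'a set \<Rightarrow> 'a set set \<Rightarrow> bool" where
  "bipartite V E \<longleftrightarrow> (\<exists>A. A \<subseteq> V \<and> (\<forall>e\<in>E. card (e \<inter> A) = 1))"

definition Ind :: "'a set \<Rightarrow> 'a set set \<Rightarrow> 'a set set" where
  "Ind V E = {S. S \<subseteq> V \<and> (\<forall>e\<in>E. \<not> e \<subseteq> S)}"

definition facets :: "'a set set \<Rightarrow> 'a set set" where
  "facets \<Delta> = {F\<in>\<Delta>. \<forall>G\<in>\<Delta>. F \<subseteq> G \<longrightarrow> G = F}"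

definition pure :: "'a set set \<Rightarrow> bool" where
  "pure \<Delta> \<longleftrightarrow> (\<forall>F\<in>facets \<Delta>. \<forall>G\<in>facets \<Delta>. card F = card G)"

definition is_simplex :: "'a set set \<Rightarrow> bool" where
  "is_simplex \<Delta> \<longleftrightarrow> (\<exists>F. finite F \<and> \<Delta> = Pow F)"

definition link :: "'a set set \<Rightarrow> 'a \<Rightarrow> 'a set set" where
  "link \<Delta> v = {\<tau>\<in>\<Delta>. v \<notin> \<tau> \<and> insert v \<tau> \<in> \<Delta>}"

definition del :: "'a set set \<Rightarrow> 'a \<Rightarrow> 'a set set" where
  "del \<Delta> v = {\<tau>\<in>\<Delta>. v \<notin> \<tau>}"

inductive vertex_decomposable :: "'a set set \<Rightarrow> bool" where
  simplex: "pure \<Delta> \<Longrightarrow> is_simplex \<Delta> \<Longrightarrow> vertex_decomposable \<Delta>"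
| decomp: "pure \<Delta> \<Longrightarrow> {v} \<in> \<Delta> \<Longrightarrow> pure (link \<Delta> v) \<Longrightarrow> pure (del \<Delta> v)
           \<Longrightarrow> vertex_decomposable (link \<Delta> v) \<Longrightarrow> vertex_decomposable (del \<Delta> v)
           \<Longrightarrow> vertex_decomposable \<Delta>"

text \<open>d = dim + 1 = maximal face size.\<close>
definition cdim :: "'a set set \<Rightarrow> nat" where
  "cdim \<Delta> = Max (card ` \<Delta>)"

text \<open>Number of faces with k elements, i.e. f_{k-1}.\<close>
definition nfaces :: "'a set set \<Rightarrow> nat \<Rightarrow> nat" where
  "nfaces \<Delta> k = card {F\<in>\<Delta>. card F = k}"

definition fvec :: "'a set set \<Rightarrow> nat list" where
  "fvec \<Delta> = map (nfaces \<Delta>) [0..<cdim \<Delta> + 1]"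

definition hvec :: "'a set set \<Rightarrow> int list" where
  "hvec \<Delta> = map (\<lambda>j. \<Sum>i=0..j. (-1) ^ (j - i) * int ((cdim \<Delta> - i) choose (j - i)) * int (nfaces \<Delta> i))
                 [0..<cdim \<Delta> + 1]"

definition strip_zeros :: "int list \<Rightarrow> int list" where
  "strip_zeros xs = rev (dropWhile (\<lambda>x. x = 0) (rev xs))"

end

theory Submission imports Defs begin


lemma alt_sum: "(\<Sum>k=0..m. (-1::int)^(m-k) * int (m choose k)) = (if m = 0 then 1 else 0)"
proof (cases "m = 0")
  case True then show ?thesis by simp
next
  case False
  have e: "(-1::int)^(m-k) = (-1)^m * (-1)^k" if "k \<le> m" for k
  proof -
    have "(-1::int)^m = (-1)^(m-k) * (-1)^k" using that by (simp add: power_add[symmetric])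
    then have "(-1::int)^m * (-1)^k = (-1)^(m-k) * ((-1)^k * (-1)^k)" by simp
    also have "(-1::int)^k * (-1)^k = 1" by (simp add: power_add[symmetric] flip: power_mult_distrib)
    finally show ?thesis by simp
  qed
  have "(\<Sum>k=0..m. (-1::int)^(m-k) * int (m choose k)) = (\<Sum>k=0..m. (-1)^m * ((-1)^k * int (m choose k)))"
    by (rule sum.cong) (auto simp: e)
  also have "\<dots> = (-1)^m * (\<Sum>k\<le>m. (-1)^k * int (m choose k))"
    by (simp add: sum_distrib_left atLeast0AtMost)
  also have "\<dots> = 0" using choose_alternating_sum[of m] False by simp
  finally show ?thesis using False by simp
qed

lemma inner_sum:
  assumes "s \<le> n" "j \<le> n"
  shows "(\<Sum>i=0..j. (-1::int)^(j-i) * int ((n-i) choose (j-i)) * int (if s \<le> i then (n-s) choose (i-s) else 0))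
         = (if s = j then 1 else 0)"
proof (cases "s \<le> j")
  case False
  then show ?thesis by (intro trans[OF sum.neutral]) auto
next
  case True
  define m where "m = j - s"
  define N where "N = n - s"
  have mN: "m \<le> N" using assms True by (simp add: m_def N_def)
  have "(\<Sum>i=0..j. (-1::int)^(j-i) * int ((n-i) choose (j-i)) * int (if s \<le> i then (n-s) choose (i-s) else 0))
       = (\<Sum>i=s..j. (-1::int)^(j-i) * int ((n-i) choose (j-i)) * int (if s \<le> i then (n-s) choose (i-s) else 0))"
    by (rule sum.mono_neutral_right) auto
  also have "\<dots> = (\<Sum>k=0..m. (-1::int)^(j-(k+s)) * int ((n-(k+s)) choose (j-(k+s))) * int ((n-s) choose (k+s-s)))"
    using sum.shift_bounds_cl_nat_ivl[of "\<lambda>i. (-1::int)^(j-i) * int ((n-i) choose (j-i)) * int (if s \<le> i then (n-s) choose (i-s) else 0)" 0 s m]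
    using True by (simp add: m_def)
  also have "\<dots> = (\<Sum>k=0..m. int (N choose m) * ((-1::int)^(m-k) * int (m choose k)))"
  proof (rule sum.cong)
    fix k assume k: "k \<in> {0..m}"
    have "(N choose m) * (m choose k) = (N choose k) * ((N-k) choose (m-k))"
      using choose_mult[of k m N] k mN by simp
    moreover have "j-(k+s) = m-k" "n-(k+s) = N-k" "k+s-s = k" using True assms by (auto simp: m_def N_def)
    ultimately show "(-1::int)^(j-(k+s)) * int ((n-(k+s)) choose (j-(k+s))) * int ((n-s) choose (k+s-s))
        = int (N choose m) * ((-1::int)^(m-k) * int (m choose k))"
      unfolding N_def[symmetric] by (simp add: algebra_simps flip: of_nat_mult)
  qed simp
  also have "\<dots> = int (N choose m) * (if m = 0 then 1 else 0)"
    by (simp add: sum_distrib_left[symmetric] alt_sum)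
  finally show ?thesis using True by (simp add: m_def)
qed



locale wg = fixes n :: nat and E0 :: "nat set set"
  assumes E0: "\<And>e. e \<in> E0 \<Longrightarrow> e \<subseteq> {..<n} \<and> card e = 2"
begin

definition K :: "nat set \<Rightarrow> nat set \<Rightarrow> nat set set" where
  "K C Z = {X. X \<subseteq> C \<union> (\<lambda>j. j+n)`C \<union> Z \<and> (\<forall>e\<in>E0. \<not> e \<subseteq> X) \<and> (\<forall>j\<in>C. \<not>(j\<in>X \<and> j+n\<in>X))}"

definition wf :: "nat set \<Rightarrow> nat set \<Rightarrow> bool" where
  "wf C Z \<longleftrightarrow> C \<subseteq> {..<n} \<and> Z \<subseteq> {n..<2*n} \<and> (\<forall>j\<in>C. j+n \<notin> Z)"

lemma wf_fin: "wf C Z \<Longrightarrow> finite C \<and> finite Z"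
  unfolding wf_def by (meson finite_atLeastLessThan finite_lessThan finite_subset)

lemma K_card_le:
  assumes w: "wf C Z" and X: "X \<in> K C Z"
  shows "card X \<le> card C + card Z"
proof -
  define h where "h x = (if x < n then x else x - n)" for x
  have fin: "finite C" "finite Z" using wf_fin[OF w] by auto
  have Xs: "X \<subseteq> C \<union> (\<lambda>j. j+n)`C \<union> Z" and nb: "\<forall>j\<in>C. \<not>(j\<in>X \<and> j+n\<in>X)"
    using X by (auto simp: K_def)
  have finX: "finite X" using Xs fin by (meson finite_Un finite_imageI finite_subset)
  have Cn: "C \<subseteq> {..<n}" using w by (auto simp: wf_def)
  have inj: "inj_on h (X - Z)"
  proof (rule inj_onI)
    fix x y assume x: "x \<in> X - Z" and y: "y \<in> X - Z" and hxy: "h x = h y"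
    have xc: "x \<in> C \<or> (x \<ge> n \<and> x - n \<in> C)" using x Xs Cn by auto
    have yc: "y \<in> C \<or> (y \<ge> n \<and> y - n \<in> C)" using y Xs Cn by auto
    show "x = y"
    proof (cases "x < n")
      case True
      show ?thesis
      proof (cases "y < n")
        case True then show ?thesis using \<open>x<n\<close> hxy by (simp add: h_def)
      next
        case False
        then have "x = y - n" using True hxy by (simp add: h_def)
        then have "y = x + n" using False by simp
        then show ?thesis using nb x y True Xs Cn by auto
      qed
    next
      case False
      show ?thesis
      proof (cases "y < n")
        case True
        then have "y = x - n" using False hxy by (simp add: h_def)
        then have "x = y + n" using False by simp
        then show ?thesis using nb x y True Xs Cn by auto
      next
        case False then show ?thesis using \<open>\<not> x<n\<close> hxy by (simp add: h_def)
      qed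
    qed
  qed
  have img: "h ` (X - Z) \<subseteq> C"
  proof
    fix y assume "y \<in> h ` (X - Z)"
    then obtain x where x: "x \<in> X - Z" "y = h x" by auto
    then show "y \<in> C" using Xs Cn by (auto simp: h_def)
  qed
  have "card (X - Z) \<le> card C"
    using card_inj_on_le[OF inj img fin(1)] .
  moreover have "card X \<le> card (X - Z) + card (X \<inter> Z)"
    using card_Int_Diff[OF finX, of Z] by (simp add: Int_commute)
  moreover have "card (X \<inter> Z) \<le> card Z" using fin by (simp add: card_mono)
  ultimately show ?thesis by linarith
qed

lemma facet_card:
  assumes w: "wf C Z" and F: "F \<in> facets (K C Z)"
  shows "card F = card C + card Z"
proof -
  have fin: "finite C" "finite Z" using wf_fin[OF w] by auto
  have Cn: "C \<subseteq> {..<n}" and Zn: "Z \<subseteq> {n..<2*n}" and CZ: "\<forall>j\<in>C. j+n \<notin> Z" using w by (auto simp: wf_def)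
  have FK: "F \<in> K C Z" and mx: "\<And>G. G \<in> K C Z \<Longrightarrow> F \<subseteq> G \<Longrightarrow> G = F"
    using F by (auto simp: facets_def)
  have Fs: "F \<subseteq> C \<union> (\<lambda>j. j+n)`C \<union> Z" and ne: "\<forall>e\<in>E0. \<not> e \<subseteq> F" and nb: "\<forall>j\<in>C. \<not>(j\<in>F \<and> j+n\<in>F)"
    using FK by (auto simp: K_def)
  have edge_low: "\<And>e x. e \<in> E0 \<Longrightarrow> x \<in> e \<Longrightarrow> x < n" using E0 by blast
  have Zin: "Z \<subseteq> F"
  proof
    fix z assume z: "z \<in> Z"
    have zn: "z \<ge> n" using z Zn by auto
    have "insert z F \<in> K C Z"
      unfolding K_def
    proof (intro CollectI conjI ballI)
      show "insert z F \<subseteq> C \<union> (\<lambda>j. j+n)`C \<union> Z" using Fs z by auto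
    next
      fix e assume e: "e \<in> E0"
      show "\<not> e \<subseteq> insert z F"
      proof
        assume "e \<subseteq> insert z F"
        then have "e \<subseteq> F" using edge_low[OF e] zn by fastforce
        then show False using ne e by blast
      qed
    next
      fix j assume j: "j \<in> C"
      show "\<not> (j \<in> insert z F \<and> j + n \<in> insert z F)"
        using nb j zn CZ z Cn by auto
    qed
    then show "z \<in> F" using mx by blast
  qed
  have Cin: "j \<in> F \<or> j + n \<in> F" if j: "j \<in> C" for j
  proof (rule ccontr)
    assume a: "\<not> (j \<in> F \<or> j + n \<in> F)"
    have "insert (j+n) F \<in> K C Z"
      unfolding K_def
    proof (intro CollectI conjI ballI)
      show "insert (j+n) F \<subseteq> C \<union> (\<lambda>j. j+n)`C \<union> Z" using Fs j by auto
    next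
      fix e assume e: "e \<in> E0"
      show "\<not> e \<subseteq> insert (j+n) F"
      proof
        assume "e \<subseteq> insert (j+n) F"
        then have "e \<subseteq> F" using edge_low[OF e] by fastforce
        then show False using ne e by blast
      qed
    next
      fix k assume k: "k \<in> C"
      show "\<not> (k \<in> insert (j+n) F \<and> k + n \<in> insert (j+n) F)"
        using nb k a j Cn by auto
    qed
    then have "insert (j+n) F = F" using mx by blast
    then show False using a by blast
  qed
  have Feq: "F = Z \<union> (F \<inter> C) \<union> (\<lambda>j. j+n)`(C - F)"
  proof (intro equalityI subsetI)
    fix x assume x: "x \<in> F"
    show "x \<in> Z \<union> (F \<inter> C) \<union> (\<lambda>j. j+n)`(C - F)"
      using Fs x nb by auto
  next
    fix x assume "x \<in> Z \<union> (F \<inter> C) \<union> (\<lambda>j. j+n)`(C - F)"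
    then show "x \<in> F" using Zin Cin by auto
  qed
  have d1: "Z \<inter> (F \<inter> C) = {}" using Zn Cn by (force simp: subset_iff)
  have d2: "(Z \<union> (F \<inter> C)) \<inter> (\<lambda>j. j+n)`(C - F) = {}" using Cn CZ by auto
  have "card F = card (Z \<union> (F \<inter> C)) + card ((\<lambda>j. j+n)`(C - F))"
    by (subst Feq, rule card_Un_disjoint) (use fin d2 in auto)
  also have "card (Z \<union> (F \<inter> C)) = card Z + card (F \<inter> C)"
    by (rule card_Un_disjoint) (use fin d1 in auto)
  also have "card ((\<lambda>j. j+n)`(C - F)) = card (C - F)"
    by (rule card_image) (simp add: inj_on_def)
  finally have "card F = card Z + card (F \<inter> C) + card (C - F)" .
  moreover have "card (F \<inter> C) + card (C - F) = card C"
    using card_Int_Diff[OF fin(1), of F] by (simp add: Int_commute)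
  ultimately show ?thesis by simp
qed

end


context wg begin

lemma pure_K: "wf C Z \<Longrightarrow> pure (K C Z)"
  unfolding pure_def using facet_card by simp

lemma edge_low: "e \<in> E0 \<Longrightarrow> x \<in> e \<Longrightarrow> x < n" using E0 by blast

lemma edge_not_single: "e \<in> E0 \<Longrightarrow> \<not> e \<subseteq> {i}"
proof
  assume e: "e \<in> E0" and s: "e \<subseteq> {i}"
  have "card e \<le> card {i}" using s by (intro card_mono) auto
  then show False using E0[OF e] by simp
qed

lemma edge_pair: assumes e: "e \<in> E0" and i: "i \<in> e" obtains j where "e = {i, j}" "j \<noteq> i"
proof -
  have "card e = 2" using E0[OF e] by simp
  then obtain a b where "e = {a, b}" "a \<noteq> b" by (meson card_2_iff)
  then show ?thesis using that i by auto
qed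

lemma single_K: "wf C Z \<Longrightarrow> i \<in> C \<Longrightarrow> {i} \<in> K C Z"
  unfolding K_def wf_def using edge_not_single by (auto simp: subset_iff)

lemma K_empty: assumes "wf {} Z" shows "K {} Z = Pow Z"
proof -
  have "\<not> e \<subseteq> X" if "e \<in> E0" "X \<subseteq> Z" for e X
  proof
    assume "e \<subseteq> X"
    have "e \<noteq> {}" using E0[OF that(1)] by auto
    then obtain x where "x \<in> e" by auto
    then have "x < n" "x \<in> Z" using edge_low that \<open>e \<subseteq> X\<close> by auto
    then show False using assms by (auto simp: wf_def)
  qed
  then show ?thesis unfolding K_def by auto
qed

lemma del_K:
  assumes w: "wf C Z" and i: "i \<in> C"
  shows "del (K C Z) i = K (C - {i}) (insert (i+n) Z)"
proof -
  have Cn: "C \<subseteq> {..<n}" and Zn: "Z \<subseteq> {n..<2*n}" and CZ: "\<forall>j\<in>C. j+n \<notin> Z" using w by (auto simp: wf_def)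
  have iN: "i < n" using i Cn by auto
  show ?thesis
  proof (intro equalityI subsetI)
    fix X assume "X \<in> del (K C Z) i"
    then have X: "X \<subseteq> C \<union> (\<lambda>j. j+n)`C \<union> Z" "\<forall>e\<in>E0. \<not> e \<subseteq> X" "\<forall>j\<in>C. \<not>(j\<in>X \<and> j+n\<in>X)" "i \<notin> X"
      by (auto simp: del_def K_def)
    show "X \<in> K (C - {i}) (insert (i+n) Z)"
      unfolding K_def using X by blast
  next
    fix X assume "X \<in> K (C - {i}) (insert (i+n) Z)"
    then have X: "X \<subseteq> (C-{i}) \<union> (\<lambda>j. j+n)`(C-{i}) \<union> insert (i+n) Z" "\<forall>e\<in>E0. \<not> e \<subseteq> X" "\<forall>j\<in>C-{i}. \<not>(j\<in>X \<and> j+n\<in>X)"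
      by (auto simp: K_def)
    have iX: "i \<notin> X"
    proof
      assume "i \<in> X"
      then have "i \<in> (C-{i}) \<union> (\<lambda>j. j+n)`(C-{i}) \<union> insert (i+n) Z" using X(1) by blast
      then show False using iN Zn by (force simp: subset_iff)
    qed
    have "X \<in> K C Z" unfolding K_def using X iX i by blast
    then show "X \<in> del (K C Z) i" using iX by (simp add: del_def)
  qed
qed

lemma wf_del: "wf C Z \<Longrightarrow> i \<in> C \<Longrightarrow> wf (C - {i}) (insert (i+n) Z)"
  unfolding wf_def by auto

end


context wg begin

definition nbr :: "nat \<Rightarrow> nat set" where "nbr i = {j. {i,j} \<in> E0}"

lemma link_K:
  assumes w: "wf C Z" and i: "i \<in> C"
  shows "link (K C Z) i = K (C - insert i (nbr i)) (Z \<union> (\<lambda>j. j+n)`(C \<inter> nbr i))"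
    (is "_ = K ?C ?Z")
proof -
  have Cn: "C \<subseteq> {..<n}" and Zn: "Z \<subseteq> {n..<2*n}" and CZ: "\<forall>j\<in>C. j+n \<notin> Z" using w by (auto simp: wf_def)
  have iN: "i < n" using i Cn by auto
  have inbr: "i \<notin> nbr i" using edge_not_single[of "{i,i}" i] by (auto simp: nbr_def)
  show ?thesis
  proof (intro equalityI subsetI)
    fix X assume "X \<in> link (K C Z) i"
    then have X: "X \<subseteq> C \<union> (\<lambda>j. j+n)`C \<union> Z" "\<forall>e\<in>E0. \<not> e \<subseteq> X" "\<forall>j\<in>C. \<not>(j\<in>X \<and> j+n\<in>X)" "i \<notin> X"
      and I: "\<forall>e\<in>E0. \<not> e \<subseteq> insert i X" "\<forall>j\<in>C. \<not>(j\<in>insert i X \<and> j+n\<in>insert i X)"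
      by (auto simp: link_def K_def)
    have sub: "X \<subseteq> ?C \<union> (\<lambda>j. j+n)`?C \<union> ?Z"
    proof
      fix x assume x: "x \<in> X"
      show "x \<in> ?C \<union> (\<lambda>j. j+n)`?C \<union> ?Z"
      proof (cases "x \<in> Z")
        case True then show ?thesis by blast
      next
        case False
        then have "x \<in> C \<or> (\<exists>j\<in>C. x = j + n)" using X(1) x by blast
        then show ?thesis
        proof
          assume xC: "x \<in> C"
          have "x \<notin> nbr i"
          proof
            assume "x \<in> nbr i"
            then have "{i,x} \<in> E0" by (simp add: nbr_def)
            moreover have "{i,x} \<subseteq> insert i X" using x by auto
            ultimately show False using I(1) by blast
          qed
          then show ?thesis using xC x X(4) by blast
        next
          assume "\<exists>j\<in>C. x = j + n"
          then obtain j where j: "j \<in> C" "x = j + n" by blast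
          have "j \<noteq> i" using I(2) i j x by blast
          then show ?thesis using j by blast
        qed
      qed
    qed
    show "X \<in> K ?C ?Z" unfolding K_def using sub X(2,3) by blast
  next
    fix X assume "X \<in> K ?C ?Z"
    then have X: "X \<subseteq> ?C \<union> (\<lambda>j. j+n)`?C \<union> ?Z" "\<forall>e\<in>E0. \<not> e \<subseteq> X" "\<forall>j\<in>?C. \<not>(j\<in>X \<and> j+n\<in>X)"
      by (auto simp: K_def)
    have low: "x \<in> ?C" if "x \<in> X" "x < n" for x
      using X(1) that Zn by (force simp: subset_iff)
    have iX: "i \<notin> X" using low[of i] iN by blast
    have inX: "i + n \<notin> X"
    proof
      assume "i + n \<in> X"
      then have "i + n \<in> ?C \<union> (\<lambda>j. j+n)`?C \<union> ?Z" using X(1) by blast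
      then show False using Cn CZ i inbr by auto
    qed
    have sub: "X \<subseteq> C \<union> (\<lambda>j. j+n)`C \<union> Z" using X(1) by blast
    have nb: "\<forall>j\<in>C. \<not>(j\<in>X \<and> j+n\<in>X)"
    proof (intro ballI notI)
      fix j assume j: "j \<in> C" "j \<in> X \<and> j + n \<in> X"
      then have "j \<in> ?C" using low Cn by blast
      then show False using X(3) j by blast
    qed
    have XK: "X \<in> K C Z" unfolding K_def using sub X(2) nb by blast
    have ed: "\<forall>e\<in>E0. \<not> e \<subseteq> insert i X"
    proof (intro ballI notI)
      fix e assume e: "e \<in> E0" and es: "e \<subseteq> insert i X"
      show False
      proof (cases "i \<in> e")
        case False then show False using es X(2) e by blast
      next
        case True
        then obtain j where ej: "e = {i, j}" "j \<noteq> i" using edge_pair e by blast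
        then have "j \<in> nbr i" using e by (simp add: nbr_def)
        moreover have "j \<in> X" using es ej by auto
        moreover have "j < n" using edge_low e ej by auto
        ultimately show False using low by blast
      qed
    qed
    have nb2: "\<forall>j\<in>C. \<not>(j\<in>insert i X \<and> j+n\<in>insert i X)"
    proof (intro ballI notI)
      fix j assume j: "j \<in> C" "j \<in> insert i X \<and> j + n \<in> insert i X"
      have "j + n \<in> X" using j iN by auto
      show False
      proof (cases "j = i")
        case True then show False using inX \<open>j + n \<in> X\<close> by simp
      next
        case False then show False using j nb \<open>j + n \<in> X\<close> by blast
      qed
    qed
    have "insert i X \<in> K C Z" unfolding K_def using sub i ed nb2 by blast
    then show "X \<in> link (K C Z) i" using XK iX by (simp add: link_def)
  qed
qed

lemma wf_link: assumes "wf C Z" "i \<in> C"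
  shows "wf (C - insert i (nbr i)) (Z \<union> (\<lambda>j. j+n)`(C \<inter> nbr i))"
  using assms unfolding wf_def by auto

lemma vd_K: "wf C Z \<Longrightarrow> vertex_decomposable (K C Z)"
proof (induction "card C" arbitrary: C Z rule: less_induct)
  case less
  have fin: "finite C" "finite Z" using wf_fin[OF less.prems] by auto
  show ?case
  proof (cases "C = {}")
    case True
    then have "K C Z = Pow Z" using K_empty less.prems by simp
    then show ?thesis using fin pure_K[OF less.prems]
      by (intro vertex_decomposable.simplex) (auto simp: is_simplex_def)
  next
    case False
    then obtain i where i: "i \<in> C" by auto
    have c1: "card (C - insert i (nbr i)) < card C"
      using i fin by (intro psubset_card_mono) auto
    have c2: "card (C - {i}) < card C"
      using i fin by (intro psubset_card_mono) auto
    show ?thesis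
    proof (rule vertex_decomposable.decomp[of _ i])
      show "pure (K C Z)" using pure_K less.prems by simp
      show "{i} \<in> K C Z" using single_K less.prems i by simp
      show "pure (link (K C Z) i)" "vertex_decomposable (link (K C Z) i)"
        using link_K[OF less.prems i] pure_K wf_link[OF less.prems i] less.hyps[OF c1] by auto
      show "pure (del (K C Z) i)" "vertex_decomposable (del (K C Z) i)"
        using del_K[OF less.prems i] pure_K wf_del[OF less.prems i] less.hyps[OF c2] by auto
    qed
  qed
qed

end


context wg begin

abbreviation "IG \<equiv> Ind {..<n} E0"
abbreviation "K0 \<equiv> K {..<n} {}"

lemma wf0: "wf {..<n} {}" by (simp add: wf_def)

lemma IG_fin: "finite IG" unfolding Ind_def by simp

lemma K0_sub: "K0 \<subseteq> Pow ({..<n} \<union> (\<lambda>j. j+n)`{..<n})" unfolding K_def by auto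

lemma K0_fin: "finite K0" using K0_sub by (rule finite_subset) simp

lemma cdim_K0: "cdim K0 = n"
proof -
  have le: "\<forall>X\<in>K0. card X \<le> n" using K_card_le[OF wf0] by fastforce
  have mem: "(\<lambda>j. j+n)`{..<n} \<in> K0"
    unfolding K_def
  proof (intro CollectI conjI ballI)
    fix e assume e: "e \<in> E0"
    show "\<not> e \<subseteq> (\<lambda>j. j+n)`{..<n}"
    proof
      assume es: "e \<subseteq> (\<lambda>j. j+n)`{..<n}"
      have "e \<noteq> {}" using E0[OF e] by auto
      then obtain x where "x \<in> e" by auto
      then show False using es edge_low[OF e] by auto
    qed
  qed auto
  have c: "card ((\<lambda>j. j+n)`{..<n}) = n" by (subst card_image) (auto simp: inj_on_def)
  show ?thesis unfolding cdim_def
    by (rule Max_eqI) (use K0_fin le image_eqI[where f=card, OF c[symmetric] mem] in auto)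
qed

definition sh :: "nat set \<Rightarrow> nat set" where "sh T = (\<lambda>j. j+n)`T"

lemma low_part: "S \<subseteq> {..<n} \<Longrightarrow> (S \<union> sh T) \<inter> {..<n} = S"
  unfolding sh_def by auto

lemma high_part: "S \<subseteq> {..<n} \<Longrightarrow> (S \<union> sh T) \<inter> {n..} = sh T"
  unfolding sh_def by auto

lemma faces_decomp:
  "{X\<in>K0. card X = i} = (\<Union>S\<in>IG. (\<lambda>T. S \<union> sh T) ` {T. T \<subseteq> {..<n} - S \<and> card S + card T = i})"
proof (intro equalityI subsetI)
  fix X assume "X \<in> {X\<in>K0. card X = i}"
  then have X: "X \<subseteq> {..<n} \<union> (\<lambda>j. j+n)`{..<n}" "\<forall>e\<in>E0. \<not> e \<subseteq> X" "\<forall>j<n. \<not>(j\<in>X \<and> j+n\<in>X)"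
    and ci: "card X = i" by (auto simp: K_def)
  define S where "S = X \<inter> {..<n}"
  define T where "T = {j\<in>{..<n}. j+n \<in> X}"
  have SI: "S \<in> IG" unfolding Ind_def S_def using X(2) by auto
  have TS: "T \<subseteq> {..<n} - S" unfolding T_def S_def using X(3) by auto
  have XST: "X = S \<union> sh T"
  proof (intro equalityI subsetI)
    fix x assume x: "x \<in> X"
    show "x \<in> S \<union> sh T"
    proof (cases "x < n")
      case True then show ?thesis using x by (simp add: S_def)
    next
      case False
      then obtain j where "j < n" "x = j + n" using X(1) x by auto
      then show ?thesis using x by (auto simp: sh_def T_def)
    qed
  next
    fix x assume "x \<in> S \<union> sh T"
    then show "x \<in> X" by (auto simp: S_def T_def sh_def)
  qed
  have fT: "finite T" unfolding T_def by simp
  have "card X = card S + card (sh T)"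
    unfolding XST by (rule card_Un_disjoint) (auto simp: S_def sh_def fT)
  moreover have "card (sh T) = card T" unfolding sh_def by (rule card_image) (simp add: inj_on_def)
  ultimately have "card S + card T = i" using ci by simp
  then show "X \<in> (\<Union>S\<in>IG. (\<lambda>T. S \<union> sh T) ` {T. T \<subseteq> {..<n} - S \<and> card S + card T = i})"
    using SI TS XST by blast
next
  fix X assume "X \<in> (\<Union>S\<in>IG. (\<lambda>T. S \<union> sh T) ` {T. T \<subseteq> {..<n} - S \<and> card S + card T = i})"
  then obtain S T where S: "S \<in> IG" and T: "T \<subseteq> {..<n} - S" "card S + card T = i" and XST: "X = S \<union> sh T"
    by blast
  have Sl: "S \<subseteq> {..<n}" and Se: "\<forall>e\<in>E0. \<not> e \<subseteq> S" using S by (auto simp: Ind_def)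
  have "X \<in> K0"
    unfolding K_def
  proof (intro CollectI conjI ballI)
    show "X \<subseteq> {..<n} \<union> (\<lambda>j. j+n)`{..<n} \<union> {}" using XST Sl T by (auto simp: sh_def)
  next
    fix e assume e: "e \<in> E0"
    show "\<not> e \<subseteq> X"
    proof
      assume "e \<subseteq> X"
      then have "e \<subseteq> S" using edge_low[OF e] XST by (auto simp: sh_def)
      then show False using Se e by blast
    qed
  next
    fix j assume j: "j \<in> {..<n}"
    show "\<not> (j \<in> X \<and> j + n \<in> X)" using XST T Sl j by (auto simp: sh_def)
  qed
  moreover have "card X = i"
  proof -
    have fT: "finite T" using T(1) finite_subset by blast
    have fS: "finite S" using Sl finite_subset by blast
    have "card X = card S + card (sh T)"
      unfolding XST by (rule card_Un_disjoint) (use Sl fS fT in \<open>auto simp: sh_def\<close>)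
    moreover have "card (sh T) = card T" unfolding sh_def by (rule card_image) (simp add: inj_on_def)
    ultimately show ?thesis using T by simp
  qed
  ultimately show "X \<in> {X\<in>K0. card X = i}" by simp
qed

lemma nfaces_K0:
  "nfaces K0 i = (\<Sum>S\<in>IG. if card S \<le> i then (n - card S) choose (i - card S) else 0)"
proof -
  have "nfaces K0 i = card (\<Union>S\<in>IG. (\<lambda>T. S \<union> sh T) ` {T. T \<subseteq> {..<n} - S \<and> card S + card T = i})"
    unfolding nfaces_def faces_decomp ..
  also have "\<dots> = (\<Sum>S\<in>IG. card ((\<lambda>T. S \<union> sh T) ` {T. T \<subseteq> {..<n} - S \<and> card S + card T = i}))"
  proof (rule card_UN_disjoint)
    show "finite IG" by (rule IG_fin)
    show "\<forall>S\<in>IG. finite ((\<lambda>T. S \<union> sh T) ` {T. T \<subseteq> {..<n} - S \<and> card S + card T = i})"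
      by (auto intro: finite_subset[of _ "Pow {..<n}"])
    show "\<forall>S1\<in>IG. \<forall>S2\<in>IG. S1 \<noteq> S2 \<longrightarrow>
      (\<lambda>T. S1 \<union> sh T) ` {T. T \<subseteq> {..<n} - S1 \<and> card S1 + card T = i} \<inter>
      (\<lambda>T. S2 \<union> sh T) ` {T. T \<subseteq> {..<n} - S2 \<and> card S2 + card T = i} = {}"
    proof (intro ballI impI)
      fix S1 S2 assume S1: "S1 \<in> IG" and S2: "S2 \<in> IG" and ne: "S1 \<noteq> S2"
      have l1: "S1 \<subseteq> {..<n}" "S2 \<subseteq> {..<n}" using S1 S2 by (auto simp: Ind_def)
      show "(\<lambda>T. S1 \<union> sh T) ` {T. T \<subseteq> {..<n} - S1 \<and> card S1 + card T = i} \<inter>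
      (\<lambda>T. S2 \<union> sh T) ` {T. T \<subseteq> {..<n} - S2 \<and> card S2 + card T = i} = {}"
      proof (rule ccontr)
        assume "\<not> ?thesis"
        then obtain T1 T2 where "S1 \<union> sh T1 = S2 \<union> sh T2" by blast
        then have "(S1 \<union> sh T1) \<inter> {..<n} = (S2 \<union> sh T2) \<inter> {..<n}" by simp
        then show False using low_part[OF l1(1)] low_part[OF l1(2)] ne by simp
      qed
    qed
  qed
  also have "\<dots> = (\<Sum>S\<in>IG. if card S \<le> i then (n - card S) choose (i - card S) else 0)"
  proof (rule sum.cong)
    fix S assume S: "S \<in> IG"
    have Sl: "S \<subseteq> {..<n}" using S by (auto simp: Ind_def)
    have inj: "inj_on (\<lambda>T. S \<union> sh T) {T. T \<subseteq> {..<n} - S \<and> card S + card T = i}"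
    proof (rule inj_onI)
      fix T1 T2 assume "S \<union> sh T1 = S \<union> sh T2"
      then have "(S \<union> sh T1) \<inter> {n..} = (S \<union> sh T2) \<inter> {n..}" by simp
      then have "sh T1 = sh T2" using high_part[OF Sl] by simp
      then show "T1 = T2" unfolding sh_def by (simp add: inj_image_eq_iff inj_on_def)
    qed
    have cd: "card ({..<n} - S) = n - card S"
      using Sl by (simp add: card_Diff_subset finite_subset)
    show "card ((\<lambda>T. S \<union> sh T) ` {T. T \<subseteq> {..<n} - S \<and> card S + card T = i}) =
          (if card S \<le> i then (n - card S) choose (i - card S) else 0)"
    proof (cases "card S \<le> i")
      case True
      have "{T. T \<subseteq> {..<n} - S \<and> card S + card T = i} = {T. T \<subseteq> {..<n} - S \<and> card T = i - card S}"
        using True by auto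
      then show ?thesis using True card_image[OF inj] n_subsets[of "{..<n} - S" "i - card S"] cd by simp
    next
      case False
      then have "{T. T \<subseteq> {..<n} - S \<and> card S + card T = i} = {}" by auto
      then show ?thesis using False by simp
    qed
  qed simp
  finally show ?thesis .
qed

lemma IG_card: "S \<in> IG \<Longrightarrow> card S \<le> n"
  unfolding Ind_def by (auto dest: card_mono[rotated])

lemma hvec_entry:
  assumes j: "j \<le> n"
  shows "(\<Sum>i=0..j. (-1::int)^(j-i) * int ((n-i) choose (j-i)) * int (nfaces K0 i)) = int (nfaces IG j)"
proof -
  have "(\<Sum>i=0..j. (-1::int)^(j-i) * int ((n-i) choose (j-i)) * int (nfaces K0 i))
      = (\<Sum>i=0..j. \<Sum>S\<in>IG. (-1::int)^(j-i) * int ((n-i) choose (j-i)) * int (if card S \<le> i then (n - card S) choose (i - card S) else 0))"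
    by (simp add: nfaces_K0 sum_distrib_left)
  also have "\<dots> = (\<Sum>S\<in>IG. \<Sum>i=0..j. (-1::int)^(j-i) * int ((n-i) choose (j-i)) * int (if card S \<le> i then (n - card S) choose (i - card S) else 0))"
    by (rule sum.swap)
  also have "\<dots> = (\<Sum>S\<in>IG. if card S = j then 1 else 0)"
    by (rule sum.cong) (use inner_sum IG_card j in auto)
  also have "\<dots> = int (nfaces IG j)"
    unfolding nfaces_def by (simp add: sum.inter_filter[OF IG_fin, symmetric])
  finally show ?thesis .
qed

lemma hvec_K0: "hvec K0 = map (\<lambda>j. int (nfaces IG j)) [0..<n+1]"
  unfolding hvec_def cdim_K0
proof (rule map_cong[OF refl])
  fix j assume "j \<in> set [0..<n+1]"
  then have "j \<le> n" by auto
  then show "(\<Sum>i=0..j. (-1::int)^(j-i) * int ((n-i) choose (j-i)) * int (nfaces K0 i)) = int (nfaces IG j)"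
    by (rule hvec_entry)
qed

end


lemma strip_lemma:
  fixes g :: "nat \<Rightarrow> int"
  assumes "m \<le> N" "g m \<noteq> 0" "\<And>k. m < k \<Longrightarrow> k \<le> N \<Longrightarrow> g k = 0"
  shows "strip_zeros (map g [0..<N+1]) = map g [0..<m+1]"
proof -
  have sp: "[0..<N+1] = [0..<m+1] @ [m+1..<N+1]"
    using upt_add_eq_append[of 0 "m+1" "N - m"] assms(1) by simp
  have z: "\<forall>x\<in>set (rev (map g [m+1..<N+1])). x = 0" using assms(3) by auto
  have "rev (map g [0..<m+1]) = g m # rev (map g [0..<m])" by simp
  then have "dropWhile (\<lambda>x. x = 0) (rev (map g [0..<m+1])) = rev (map g [0..<m+1])"
    using assms(2) by simp
  then show ?thesis
    unfolding strip_zeros_def sp using z by (simp add: dropWhile_append)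
qed

lemma transport_Ind:
  assumes inj: "inj_on f V" and E: "\<forall>e\<in>E. e \<subseteq> V"
  shows "Ind (f ` V) ((`) f ` E) = (`) f ` Ind V E"
proof (intro equalityI subsetI)
  fix X assume X: "X \<in> Ind (f ` V) ((`) f ` E)"
  define S where "S = V \<inter> f -` X"
  have XS: "X = f ` S" using X unfolding S_def Ind_def by auto
  have "S \<in> Ind V E"
    unfolding Ind_def
  proof (intro CollectI conjI ballI)
    show "S \<subseteq> V" by (simp add: S_def)
    fix e assume e: "e \<in> E"
    show "\<not> e \<subseteq> S"
    proof
      assume "e \<subseteq> S"
      then have "f ` e \<subseteq> X" using XS by auto
      then show False using X e by (auto simp: Ind_def)
    qed
  qed
  then show "X \<in> (`) f ` Ind V E" using XS by blast
next
  fix X assume "X \<in> (`) f ` Ind V E"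
  then obtain S where S: "S \<in> Ind V E" "X = f ` S" by blast
  have SV: "S \<subseteq> V" and Se: "\<forall>e\<in>E. \<not> e \<subseteq> S" using S by (auto simp: Ind_def)
  show "X \<in> Ind (f ` V) ((`) f ` E)"
    unfolding Ind_def
  proof (intro CollectI conjI ballI)
    show "X \<subseteq> f ` V" using S SV by auto
    fix e' assume "e' \<in> (`) f ` E"
    then obtain e where e: "e \<in> E" "e' = f ` e" by blast
    show "\<not> e' \<subseteq> X"
    proof
      assume "e' \<subseteq> X"
      then have "f ` e \<subseteq> f ` S" using e S by simp
      then have "e \<subseteq> S"
        using inj E e SV by (auto simp: inj_on_def subset_iff image_iff) (metis subsetD)
      then show False using Se e by blast
    qed
  qed
qed



theorem corollary4p15:
  fixes V :: "'a set" and E :: "'a set set"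
  assumes "simple_graph V E" and "bipartite V E"
  shows "\<exists>(W :: nat set) F. simple_graph W F \<and> bipartite W F
           \<and> vertex_decomposable (Ind W F)
           \<and> strip_zeros (hvec (Ind W F)) = map int (fvec (Ind V E))"
proof -
  have finV: "finite V" and EV: "\<forall>e\<in>E. e \<subseteq> V \<and> card e = 2"
    using assms(1) by (auto simp: simple_graph_def)
  obtain A where A: "A \<subseteq> V" "\<forall>e\<in>E. card (e \<inter> A) = 1" using assms(2) by (auto simp: bipartite_def)
  define n where "n = card V"
  obtain f where bij: "bij_betw f V {0..<n}" using ex_bij_betw_finite_nat[OF finV] n_def by blast
  have inj: "inj_on f V" and fV: "f ` V = {..<n}" using bij by (auto simp: bij_betw_def)
  define E0 where "E0 = (`) f ` E"
  have cardf: "card (f ` S) = card S" if "S \<subseteq> V" for S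
    using card_image[OF inj_on_subset[OF inj that]] .
  interpret wg n E0
  proof
    fix e assume "e \<in> E0"
    then obtain e' where e': "e' \<in> E" "e = f ` e'" by (auto simp: E0_def)
    have "e' \<subseteq> V" "card e' = 2" using EV e' by auto
    then have "f ` e' \<subseteq> f ` V" by (intro image_mono) simp
    then show "e \<subseteq> {..<n} \<and> card e = 2" using \<open>card e' = 2\<close> cardf[OF \<open>e' \<subseteq> V\<close>] fV e' by simp
  qed
  define W where "W = {..<n} \<union> (\<lambda>j. j+n) ` {..<n}"
  define F where "F = E0 \<union> {{j, j+n} | j. j < n}"
  have IndWF: "Ind W F = K0"
  proof (intro equalityI subsetI)
    fix X assume X: "X \<in> Ind W F"
    have "\<forall>j\<in>{..<n}. \<not>(j\<in>X \<and> j+n\<in>X)"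
    proof (intro ballI notI)
      fix j assume "j \<in> {..<n}" "j \<in> X \<and> j + n \<in> X"
      then have "{j, j+n} \<in> F" "{j, j+n} \<subseteq> X" unfolding F_def by auto
      then show False using X unfolding Ind_def by blast
    qed
    then show "X \<in> K0" using X unfolding Ind_def K_def W_def F_def by auto
  next
    fix X assume X: "X \<in> K0"
    have "\<not> e \<subseteq> X" if "e \<in> F" for e
      using that X unfolding F_def K_def by auto
    then show "X \<in> Ind W F" using X unfolding Ind_def K_def W_def by auto
  qed
  have IG: "IG = (`) f ` Ind V E"
    using transport_Ind[OF inj, of E] EV fV unfolding E0_def by auto
  have injP: "inj_on ((`) f) (Ind V E)"
    by (rule inj_on_subset[OF inj_on_image_Pow[OF inj]]) (auto simp: Ind_def)
  have IndV: "S \<subseteq> V" if "S \<in> Ind V E" for S using that by (auto simp: Ind_def)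
  have nf: "nfaces IG k = nfaces (Ind V E) k" for k
  proof -
    have "{X \<in> IG. card X = k} = (`) f ` {S \<in> Ind V E. card S = k}"
      unfolding IG using cardf IndV by auto
    then show ?thesis unfolding nfaces_def
      using card_image[OF inj_on_subset[OF injP]] by simp
  qed
  have finI: "finite (Ind V E)" using finV unfolding Ind_def by simp
  have emI: "{} \<in> Ind V E" unfolding Ind_def using EV by auto
  define \<alpha> where "\<alpha> = cdim (Ind V E)"
  have cle: "card S \<le> n" if "S \<in> Ind V E" for S
    using IndV[OF that] finV n_def card_mono by blast
  have aN: "\<alpha> \<le> n" unfolding \<alpha>_def cdim_def using finI emI cle by (subst Max_le_iff) auto
  have ain: "\<alpha> \<in> card ` Ind V E" unfolding \<alpha>_def cdim_def using finI emI by (intro Max_in) auto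
  have apos: "nfaces (Ind V E) \<alpha> \<noteq> 0"
  proof -
    obtain S where "S \<in> Ind V E" "card S = \<alpha>" using ain by auto
    then have "{F \<in> Ind V E. card F = \<alpha>} \<noteq> {}" by auto
    then show ?thesis unfolding nfaces_def using finI by simp
  qed
  have azero: "nfaces (Ind V E) k = 0" if "\<alpha> < k" for k
  proof -
    have "{F \<in> Ind V E. card F = k} = {}"
    proof (rule ccontr)
      assume "{F \<in> Ind V E. card F = k} \<noteq> {}"
      then obtain S where "S \<in> Ind V E" "card S = k" by auto
      then have "k \<le> \<alpha>" unfolding \<alpha>_def cdim_def using finI by auto
      then show False using that by simp
    qed
    then show ?thesis unfolding nfaces_def by (metis card.empty)
  qed
  have hv: "strip_zeros (hvec (Ind W F)) = map int (fvec (Ind V E))"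
  proof -
    have "hvec (Ind W F) = map (\<lambda>j. int (nfaces (Ind V E) j)) [0..<n+1]"
      unfolding IndWF hvec_K0 nf ..
    also have "strip_zeros \<dots> = map (\<lambda>j. int (nfaces (Ind V E) j)) [0..<\<alpha>+1]"
      by (rule strip_lemma) (use aN apos azero in auto)
    finally show ?thesis unfolding fvec_def \<alpha>_def by simp
  qed
  have sg: "simple_graph W F"
    unfolding simple_graph_def
  proof (rule conjI)
    show "finite W" unfolding W_def by simp
    show "\<forall>e\<in>F. e \<subseteq> W \<and> card e = 2"
      unfolding F_def W_def using E0 by auto
  qed
  define A' where "A' = f ` A \<union> (\<lambda>j. j+n) ` {j. j < n \<and> j \<notin> f ` A}"
  have fA: "f ` A \<subseteq> {..<n}" using A fV by auto
  have bp: "bipartite W F"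
    unfolding bipartite_def
  proof (intro exI[of _ A'] conjI ballI)
    show "A' \<subseteq> W" unfolding A'_def W_def using fA by auto
    fix e assume "e \<in> F"
    then consider (a) "e \<in> E0" | (b) j where "j < n" "e = {j, j+n}" unfolding F_def by blast
    then show "card (e \<inter> A') = 1"
    proof cases
      case a
      then obtain e' where e': "e' \<in> E" "e = f ` e'" by (auto simp: E0_def)
      have "e \<subseteq> {..<n}" using E0 a by blast
      then have "e \<inter> A' = e \<inter> f ` A" unfolding A'_def by auto
      also have "\<dots> = f ` (e' \<inter> A)" using inj_on_image_Int[OF inj, of e' A] e' EV A by auto
      finally show ?thesis using cardf[of "e' \<inter> A"] e' EV A by auto
    next
      case b
      show ?thesis
      proof (cases "j \<in> f ` A")
        case True
        then have "e \<inter> A' = {j}" using b fA unfolding A'_def by auto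
        then show ?thesis by simp
      next
        case False
        then have "e \<inter> A' = {j+n}" using b fA unfolding A'_def by auto
        then show ?thesis by simp
      qed
    qed
  qed
  have vd: "vertex_decomposable (Ind W F)" using vd_K[OF wf0] IndWF by simp
  show ?thesis
    by (rule exI[of _ W], rule exI[of _ F]) (use sg bp hv vd in blast)
qed


end
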